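(* Let $G$ be a distance-regular graph of diameter $d$ which is an antipodal double cover. If $l$ is a distance magic labeling or a closed distance magic labeling of $G$, then $l$ is a $\{j,d-j\}$-magic labeling of $G$ for every $j\in\{0,1,\dots,d\}$. Moreover, if $G$ is bipartite and $l$ is a distance magic labeling, then $d\equiv 2\pmod 4$.
   Context: A connected graph $G$ of diameter $d$ is distance-regular if there are non-negative integers $b_i,c_i$ ($0\le i\le d$) such that for any two vertices $x,y$ at distance $i$, $y$ has exactly $c_i$ neighbours at distance $i-1$ from $x$ and exactly $b_i$ neighbours at distance $i+1$ from $x$. For a vertex $x$, $G_i(x)$ is the set of vertices at distance $i$ from $x$. $G$ is an antipodal double cover if $|G_d(x)|=1$ for every vertex $x$. For a set of distances $D$, $N_D(x)=\bigcup_{i\in D}G_i(x)$. For $G$ of order $N$, a $D$-magic labeling is a bijection $f:V(G)\to\{1,\dots,N\}$ such that $\sum_{y\in N_D(x)}f(y)$ is the same constant for every vertex $x$. A distance magic labeling is a $\{1\}$-magic labeling and a closed distance magic labeling is a $\{0,1\}$-magic labeling. *)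

theory Defs
  imports Main
begin

text \<open>A finite simple graph is given by a vertex set V and a symmetric, irreflexive
adjacency relation E (only edges between vertices of V are considered).\<close>

definition simple_graph :: "'a set \<Rightarrow> ('a \<Rightarrow> 'a \<Rightarrow> bool) \<Rightarrow> bool" where
  "simple_graph V E \<longleftrightarrow> finite V \<and> V \<noteq> {} \<and> (\<forall>x y. E x y \<longrightarrow> E y x) \<and> (\<forall>x. \<not> E x x)"

definition adj_rel :: "'a set \<Rightarrow> ('a \<Rightarrow> 'a \<Rightarrow> bool) \<Rightarrow> ('a \<times> 'a) set" where
  "adj_rel V E = {(x, y). x \<in> V \<and> y \<in> V \<and> E x y}"

definition connected_graph :: "'a set \<Rightarrow> ('a \<Rightarrow> 'a \<Rightarrow> bool) \<Rightarrow> bool" where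
  "connected_graph V E \<longleftrightarrow> simple_graph V E \<and> (\<forall>x\<in>V. \<forall>y\<in>V. (x, y) \<in> (adj_rel V E)\<^sup>*)"

definition gdist :: "'a set \<Rightarrow> ('a \<Rightarrow> 'a \<Rightarrow> bool) \<Rightarrow> 'a \<Rightarrow> 'a \<Rightarrow> nat" where
  "gdist V E x y = (LEAST n. (x, y) \<in> (adj_rel V E) ^^ n)"

definition diameter :: "'a set \<Rightarrow> ('a \<Rightarrow> 'a \<Rightarrow> bool) \<Rightarrow> nat" where
  "diameter V E = Max {gdist V E x y | x y. x \<in> V \<and> y \<in> V}"

definition sphere :: "'a set \<Rightarrow> ('a \<Rightarrow> 'a \<Rightarrow> bool) \<Rightarrow> nat \<Rightarrow> 'a \<Rightarrow> 'a set" where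
  "sphere V E i x = {y \<in> V. gdist V E x y = i}"

definition dist_nbhd :: "'a set \<Rightarrow> ('a \<Rightarrow> 'a \<Rightarrow> bool) \<Rightarrow> nat set \<Rightarrow> 'a \<Rightarrow> 'a set" where
  "dist_nbhd V E D x = {y \<in> V. gdist V E x y \<in> D}"

definition distance_regular :: "'a set \<Rightarrow> ('a \<Rightarrow> 'a \<Rightarrow> bool) \<Rightarrow> bool" where
  "distance_regular V E \<longleftrightarrow> connected_graph V E \<and>
     (\<exists>b c :: nat \<Rightarrow> nat. \<forall>x\<in>V. \<forall>y\<in>V.
        card {z \<in> V. E y z \<and> gdist V E x z + 1 = gdist V E x y} = c (gdist V E x y) \<and>
        card {z \<in> V. E y z \<and> gdist V E x z = gdist V E x y + 1} = b (gdist V E x y))"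

text \<open>Antipodal double cover: every vertex has exactly one vertex at maximal distance d
(the antipodal classes have size 2, so in particular d \<ge> 1).\<close>
definition antipodal_double_cover :: "'a set \<Rightarrow> ('a \<Rightarrow> 'a \<Rightarrow> bool) \<Rightarrow> bool" where
  "antipodal_double_cover V E \<longleftrightarrow> diameter V E \<ge> 1 \<and>
     (\<forall>x\<in>V. card (sphere V E (diameter V E) x) = 1)"

definition bipartite :: "'a set \<Rightarrow> ('a \<Rightarrow> 'a \<Rightarrow> bool) \<Rightarrow> bool" where
  "bipartite V E \<longleftrightarrow> (\<exists>A \<subseteq> V. \<forall>x\<in>V. \<forall>y\<in>V. E x y \<longrightarrow> (x \<in> A \<longleftrightarrow> y \<notin> A))"

definition D_magic :: "'a set \<Rightarrow> ('a \<Rightarrow> 'a \<Rightarrow> bool) \<Rightarrow> nat set \<Rightarrow> ('a \<Rightarrow> nat) \<Rightarrow> bool" where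
  "D_magic V E D f \<longleftrightarrow> bij_betw f V {1..card V} \<and>
     (\<exists>k. \<forall>x\<in>V. (\<Sum>y\<in>dist_nbhd V E D x. f y) = k)"

abbreviation distance_magic where "distance_magic V E f \<equiv> D_magic V E {1} f"
abbreviation closed_distance_magic where "closed_distance_magic V E f \<equiv> D_magic V E {0, 1} f"

end

theory Submission imports Defs Complex_Main begin

locale cg =
  fixes V :: "'a set" and E :: "'a \<Rightarrow> 'a \<Rightarrow> bool"
  assumes conn: "connected_graph V E"
begin

abbreviation "R \<equiv> adj_rel V E"
abbreviation "gd \<equiv> gdist V E"

lemma finV: "finite V" and neV: "V \<noteq> {}" and symE: "E x y \<Longrightarrow> E y x" and irrE: "\<not> E x x"
  using conn unfolding connected_graph_def simple_graph_def by auto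

lemma R_iff: "(x,y) \<in> R \<longleftrightarrow> x \<in> V \<and> y \<in> V \<and> E x y"
  by (simp add: adj_rel_def)

lemma relpow_sym: "(x,y) \<in> R ^^ n \<Longrightarrow> (y,x) \<in> R ^^ n"
proof (induction n arbitrary: y)
  case 0 then show ?case by simp
next
  case (Suc n)
  from Suc.prems obtain z where "(x,z) \<in> R ^^ n" "(z,y) \<in> R" by (rule relpow_Suc_E)
  then have "(y,z) \<in> R" "(z,x) \<in> R ^^ n" using Suc.IH symE by (auto simp: R_iff)
  then show ?case by (rule relpow_Suc_I2)
qed

lemma dist_path: "x \<in> V \<Longrightarrow> y \<in> V \<Longrightarrow> (x,y) \<in> R ^^ (gd x y)"
proof -
  assume "x \<in> V" "y \<in> V"
  then have "(x,y) \<in> R\<^sup>*" using conn unfolding connected_graph_def by auto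
  then have "\<exists>n. (x,y) \<in> R ^^ n" by (simp add: rtrancl_power)
  then show ?thesis unfolding gdist_def by (rule LeastI_ex)
qed

lemma dist_le: "(x,y) \<in> R ^^ n \<Longrightarrow> gd x y \<le> n"
  unfolding gdist_def by (rule Least_le)

lemma dist_sym: "x \<in> V \<Longrightarrow> y \<in> V \<Longrightarrow> gd x y = gd y x"
  by (meson antisym dist_le dist_path relpow_sym)

lemma dist_self: "gd x x = 0"
  using dist_le[of x x 0] by simp

lemma dist_0: "gd x y = 0 \<Longrightarrow> x \<in> V \<Longrightarrow> y \<in> V \<Longrightarrow> x = y"
  using dist_path[of x y] by simp

lemma dist_tri: "x \<in> V \<Longrightarrow> y \<in> V \<Longrightarrow> z \<in> V \<Longrightarrow> gd x z \<le> gd x y + gd y z"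
proof -
  assume V: "x \<in> V" "y \<in> V" "z \<in> V"
  have "(x,z) \<in> R ^^ gd x y O R ^^ gd y z" using dist_path V by blast
  then have "(x,z) \<in> R ^^ (gd x y + gd y z)" by (simp add: relpow_add)
  then show ?thesis by (rule dist_le)
qed

lemma dist_1_iff: "x \<in> V \<Longrightarrow> y \<in> V \<Longrightarrow> gd x y = 1 \<longleftrightarrow> E x y"
proof
  assume V: "x \<in> V" "y \<in> V" and "gd x y = 1"
  then show "E x y" using dist_path[OF V] by (simp add: R_iff)
next
  assume V: "x \<in> V" "y \<in> V" and e: "E x y"
  then have "(x,y) \<in> R ^^ 1" by (simp add: R_iff)
  then have "gd x y \<le> 1" by (rule dist_le)
  moreover have "gd x y \<noteq> 0" using dist_0 V e irrE by blast
  ultimately show "gd x y = 1" by simp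
qed

lemma dist_nb: assumes "x \<in> V" "y \<in> V" "z \<in> V" "E y z"
  shows "gd x z \<le> gd x y + 1" "gd x y \<le> gd x z + 1"
proof -
  have "gd y z = 1" "gd z y = 1" using assms dist_1_iff symE by auto
  then show "gd x z \<le> gd x y + 1" "gd x y \<le> gd x z + 1"
    using dist_tri[of x y z] dist_tri[of x z y] assms by auto
qed

lemma dist_pred: assumes "x \<in> V" "y \<in> V" "gd x y = Suc n"
  shows "\<exists>z\<in>V. E z y \<and> gd x z = n"
proof -
  have "(x,y) \<in> R ^^ Suc n" using dist_path assms by metis
  then obtain z where z: "(x,z) \<in> R ^^ n" "(z,y) \<in> R" by (rule relpow_Suc_E)
  then have zV: "z \<in> V" and e: "E z y" by (auto simp: R_iff)
  have "gd x z \<le> n" by (rule dist_le[OF z(1)])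
  moreover have "gd x y \<le> gd x z + 1" using dist_nb[OF assms(1) zV assms(2) e] by simp
  ultimately show ?thesis using zV e assms by auto
qed

lemma dist_between: "x \<in> V \<Longrightarrow> y \<in> V \<Longrightarrow> gd x y = n \<Longrightarrow> m \<le> n \<Longrightarrow> \<exists>z\<in>V. gd x z = m"
proof (induction n arbitrary: y)
  case 0 then show ?case by auto
next
  case (Suc n)
  show ?case
  proof (cases "m = Suc n")
    case True then show ?thesis using Suc by auto
  next
    case False
    obtain z where "z \<in> V" "gd x z = n" using dist_pred Suc.prems by blast
    then show ?thesis using Suc False by auto
  qed
qed

lemma sphere0: "x \<in> V \<Longrightarrow> sphere V E 0 x = {x}"
  unfolding sphere_def using dist_0 dist_self by auto

lemma sphere1: "x \<in> V \<Longrightarrow> sphere V E 1 x = {z\<in>V. E x z}"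
  unfolding sphere_def using dist_1_iff by auto

lemma fin_diam: "finite {gdist V E x y | x y. x \<in> V \<and> y \<in> V}"
proof -
  have "{gdist V E x y | x y. x \<in> V \<and> y \<in> V} = (\<lambda>(x,y). gd x y) ` (V \<times> V)" by auto
  then show ?thesis using finV by simp
qed

lemma dist_le_diam: "x \<in> V \<Longrightarrow> y \<in> V \<Longrightarrow> gd x y \<le> diameter V E"
  unfolding diameter_def using fin_diam by (intro Max_ge) auto

lemma diam_attained: "\<exists>x\<in>V. \<exists>y\<in>V. gd x y = diameter V E"
proof -
  have "diameter V E \<in> {gdist V E x y | x y. x \<in> V \<and> y \<in> V}"
    unfolding diameter_def using fin_diam neV by (intro Max_in) auto
  then show ?thesis by (smt (verit, best) mem_Collect_eq)
qed

lemma exists_dist: "m \<le> diameter V E \<Longrightarrow> \<exists>x\<in>V. \<exists>y\<in>V. gd x y = m"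
  using diam_attained dist_between by metis

lemma bip_parity:
  assumes "A \<subseteq> V" "\<forall>x\<in>V. \<forall>y\<in>V. E x y \<longrightarrow> (x \<in> A \<longleftrightarrow> y \<notin> A)"
  shows "(u,v) \<in> R ^^ n \<Longrightarrow> (v \<in> A \<longleftrightarrow> (u \<in> A \<longleftrightarrow> even n))"
proof (induction n arbitrary: v)
  case 0 then show ?case by simp
next
  case (Suc n)
  from Suc.prems obtain m where "(u,m) \<in> R ^^ n" "(m,v) \<in> R" by (rule relpow_Suc_E)
  then show ?case using Suc.IH assms by (auto simp: R_iff)
qed

lemma bip_nb: assumes "bipartite V E" "x \<in> V" "y \<in> V" "z \<in> V" "E y z"
  shows "gd x y \<noteq> gd x z"
proof
  assume eq: "gd x y = gd x z"
  obtain A where A: "A \<subseteq> V" "\<forall>x\<in>V. \<forall>y\<in>V. E x y \<longrightarrow> (x \<in> A \<longleftrightarrow> y \<notin> A)"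
    using assms(1) unfolding bipartite_def by auto
  have "y \<in> A \<longleftrightarrow> (x \<in> A \<longleftrightarrow> even (gd x y))" using bip_parity[OF A dist_path] assms by blast
  moreover have "z \<in> A \<longleftrightarrow> (x \<in> A \<longleftrightarrow> even (gd x z))" using bip_parity[OF A dist_path] assms by blast
  ultimately show False using eq A assms by auto
qed

end

locale drg = cg +
  fixes b c :: "nat \<Rightarrow> nat"
  assumes cnt: "\<forall>x\<in>V. \<forall>y\<in>V.
        card {z \<in> V. E y z \<and> gdist V E x z + 1 = gdist V E x y} = c (gdist V E x y) \<and>
        card {z \<in> V. E y z \<and> gdist V E x z = gdist V E x y + 1} = b (gdist V E x y)"
begin

definition a :: "nat \<Rightarrow> real" where "a h = real (b 0) - real (b h) - real (c h)"

lemma deg: "y \<in> V \<Longrightarrow> card {z\<in>V. E y z} = b 0"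
proof -
  assume y: "y \<in> V"
  have "{z\<in>V. E y z} = {z \<in> V. E y z \<and> gd y z = gd y y + 1}"
    using dist_1_iff y by (auto simp: dist_self)
  moreover have "card {z\<in>V. E y z \<and> gd y z = gd y y + 1} = b (gd y y)" using cnt y by blast
  ultimately show ?thesis by (simp add: dist_self)
qed

lemma partition: assumes x: "x \<in> V" and y: "y \<in> V"
  shows "b 0 = c (gd x y) + card {z\<in>V. E y z \<and> gd x z = gd x y} + b (gd x y)"
proof -
  let ?A = "{z \<in> V. E y z \<and> gd x z + 1 = gd x y}"
  let ?B = "{z\<in>V. E y z \<and> gd x z = gd x y}"
  let ?C = "{z \<in> V. E y z \<and> gd x z = gd x y + 1}"
  have "{z\<in>V. E y z} = ?A \<union> ?B \<union> ?C"
  proof safe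
    fix z assume "z \<in> V" "E y z" "gd x z \<noteq> gd x y" "gd x z \<noteq> gd x y + 1"
    then show "gd x z + 1 = gd x y" using dist_nb[OF x y \<open>z\<in>V\<close> \<open>E y z\<close>] by simp
  qed
  moreover have "card (?A \<union> ?B \<union> ?C) = card ?A + card ?B + card ?C"
    using finV by (subst card_Un_disjoint, auto)+
  ultimately show ?thesis using deg[OF y] cnt x y by simp
qed

lemma count: assumes x: "x \<in> V" and y: "y \<in> V"
  shows "real (card {z\<in>V. E x z \<and> gd z y = i}) =
    (if i + 1 = gd x y then real (c (gd x y)) else 0) + (if i = gd x y then a (gd x y) else 0)
    + (if i = gd x y + 1 then real (b (gd x y)) else 0)"
proof -
  let ?h = "gd x y"
  have hs: "gd y x = ?h" using dist_sym x y by simp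
  have T: "{z\<in>V. E x z \<and> gd z y = i} = {z\<in>V. E x z \<and> gd y z = i}"
    using dist_sym y by auto
  have P: "b 0 = c ?h + card {z\<in>V. E x z \<and> gd y z = ?h} + b ?h"
    using partition[OF y x] hs by simp
  have cA: "card {z \<in> V. E x z \<and> gd y z + 1 = ?h} = c ?h"
   and cC: "card {z \<in> V. E x z \<and> gd y z = ?h + 1} = b ?h" using cnt x y unfolding hs[symmetric] by blast+
  show ?thesis
  proof (cases "i + 1 = ?h")
    case True
    then have "{z\<in>V. E x z \<and> gd y z = i} = {z \<in> V. E x z \<and> gd y z + 1 = ?h}" by auto
    then show ?thesis using True T cA by simp
  next
    case F1: False
    show ?thesis
    proof (cases "i = ?h")
      case True
      then show ?thesis using T P F1 by (simp add: a_def)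
    next
      case F2: False
      show ?thesis
      proof (cases "i = ?h + 1")
        case True
        then show ?thesis using T cC F1 F2 by simp
      next
        case False
        have "\<forall>z\<in>V. E x z \<longrightarrow> gd y z \<noteq> i"
        proof (intro ballI impI)
          fix z assume "z \<in> V" "E x z"
          then show "gd y z \<noteq> i" using dist_nb[OF y x \<open>z\<in>V\<close> \<open>E x z\<close>] hs F1 F2 False by simp
        qed
        then have E: "{z\<in>V. E x z \<and> gd y z = i} = {}" by auto
        have "card {z\<in>V. E x z \<and> gd z y = i} = 0" unfolding T E by simp
        then show ?thesis using F1 F2 False by simp
      qed
    qed
  qed
qed

lemma sum_sphere: "(\<Sum>y\<in>sphere V E j x. w y) = (\<Sum>y\<in>V. if gd x y = j then w y else 0)"
  unfolding sphere_def using finV by (simp add: sum.inter_filter)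

lemma REC: assumes x: "x \<in> V"
  shows "(\<Sum>z\<in>sphere V E 1 x. \<Sum>y\<in>sphere V E (Suc i) z. (w y :: real)) =
     real (c (i+2)) * (\<Sum>y\<in>sphere V E (i+2) x. w y) + a (i+1) * (\<Sum>y\<in>sphere V E (i+1) x. w y)
     + real (b i) * (\<Sum>y\<in>sphere V E i x. w y)"
proof -
  let ?N = "{z\<in>V. E x z}"
  have finN: "finite ?N" using finV by simp
  have "(\<Sum>z\<in>sphere V E 1 x. \<Sum>y\<in>sphere V E (Suc i) z. w y)
      = (\<Sum>z\<in>?N. \<Sum>y\<in>sphere V E (Suc i) z. w y)"
    unfolding sphere1[OF x] ..
  also have "\<dots> = (\<Sum>z\<in>?N. \<Sum>y\<in>V. if gd z y = Suc i then w y else 0)"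
    by (simp only: sum_sphere)
  also have "\<dots> = (\<Sum>y\<in>V. \<Sum>z\<in>?N. if gd z y = Suc i then w y else 0)"
    by (rule sum.swap)
  also have "\<dots> = (\<Sum>y\<in>V. w y * real (card {z\<in>V. E x z \<and> gd z y = Suc i}))"
  proof (rule sum.cong[OF refl])
    fix y assume "y \<in> V"
    have "(\<Sum>z\<in>?N. if gd z y = Suc i then w y else 0) = (\<Sum>z\<in>{z\<in>?N. gd z y = Suc i}. w y)"
      using sum.inter_filter[OF finN, of "\<lambda>_. w y" "\<lambda>z. gd z y = Suc i"] by simp
    also have "{z\<in>?N. gd z y = Suc i} = {z\<in>V. E x z \<and> gd z y = Suc i}" by auto
    finally show "(\<Sum>z\<in>?N. if gd z y = Suc i then w y else 0) = w y * real (card {z\<in>V. E x z \<and> gd z y = Suc i})"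
      by simp
  qed
  also have "\<dots> = (\<Sum>y\<in>V. (if gd x y = i+2 then real (c (i+2)) * w y else 0)
       + (if gd x y = i+1 then a (i+1) * w y else 0) + (if gd x y = i then real (b i) * w y else 0))"
  proof (rule sum.cong[OF refl])
    fix y assume y: "y \<in> V"
    show "w y * real (card {z\<in>V. E x z \<and> gd z y = Suc i}) = (if gd x y = i+2 then real (c (i+2)) * w y else 0)
       + (if gd x y = i+1 then a (i+1) * w y else 0) + (if gd x y = i then real (b i) * w y else 0)"
      unfolding count[OF x y] by (auto simp: algebra_simps)
  qed
  also have "\<dots> = real (c (i+2)) * (\<Sum>y\<in>V. if gd x y = i+2 then w y else 0)
       + a (i+1) * (\<Sum>y\<in>V. if gd x y = i+1 then w y else 0) + real (b i) * (\<Sum>y\<in>V. if gd x y = i then w y else 0)"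
    by (simp only: sum.distrib sum_distrib_left if_distrib[of "(*) _"] mult_zero_right)
  finally show ?thesis by (simp only: sum_sphere)
qed


lemma c_pos: assumes "1 \<le> h" "h \<le> diameter V E" shows "0 < c h"
proof -
  obtain x y where xy: "x \<in> V" "y \<in> V" "gd x y = h" using exists_dist assms by blast
  obtain n where h: "h = Suc n" using assms by (cases h) auto
  obtain z where z: "z \<in> V" "E z y" "gd x z = n" using dist_pred xy h by blast
  have "z \<in> {z \<in> V. E y z \<and> gd x z + 1 = gd x y}" using z xy h symE by auto
  moreover have "card {z \<in> V. E y z \<and> gd x z + 1 = gd x y} = c h" using cnt xy by auto
  ultimately show ?thesis using finV
    by (metis (no_types, lifting) card_gt_0_iff empty_iff finite_subset mem_Collect_eq subsetI)
qed

lemma b_pos: assumes "h < diameter V E" shows "0 < b h"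
proof -
  obtain x y where xy: "x \<in> V" "y \<in> V" "gd x y = Suc h" using exists_dist assms
    by (metis Suc_leI)
  obtain z where z: "z \<in> V" "E z y" "gd x z = h" using dist_pred xy by blast
  have "y \<in> {w \<in> V. E z w \<and> gd x w = gd x z + 1}" using z xy by auto
  moreover have "card {w \<in> V. E z w \<and> gd x w = gd x z + 1} = b h" using cnt xy z by auto
  ultimately show ?thesis using finV
    by (metis (no_types, lifting) card_gt_0_iff empty_iff finite_subset mem_Collect_eq subsetI)
qed

lemma sphere_sub: "sphere V E i x \<subseteq> V" unfolding sphere_def by auto

lemma STEP:
  assumes eig: "\<forall>x\<in>V. (\<Sum>y\<in>sphere V E 1 x. w y) = (\<theta>::real) * w x"
    and p: "\<forall>x\<in>V. (\<Sum>y\<in>sphere V E i x. w y) = p * w x"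
    and q: "\<forall>x\<in>V. (\<Sum>y\<in>sphere V E (i+1) x. w y) = q * w x"
    and le: "i + 2 \<le> diameter V E"
  shows "\<forall>x\<in>V. (\<Sum>y\<in>sphere V E (i+2) x. w y) =
     ((q * \<theta> - a (i+1) * q - real (b i) * p) / real (c (i+2))) * w x"
proof
  fix x assume x: "x \<in> V"
  have cp: "0 < c (i+2)" using c_pos le by simp
  have "(\<Sum>z\<in>sphere V E 1 x. \<Sum>y\<in>sphere V E (Suc i) z. w y) = (\<Sum>z\<in>sphere V E 1 x. q * w z)"
    using q sphere_sub by (intro sum.cong) auto
  also have "\<dots> = q * (\<theta> * w x)" using eig x by (simp add: sum_distrib_left[symmetric])
  finally have "q * (\<theta> * w x) = real (c (i+2)) * (\<Sum>y\<in>sphere V E (i+2) x. w y) + a (i+1) * (q * w x)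
     + real (b i) * (p * w x)" using REC[OF x, of w i] p q x by simp
  then show "(\<Sum>y\<in>sphere V E (i+2) x. w y) =
     ((q * \<theta> - a (i+1) * q - real (b i) * p) / real (c (i+2))) * w x"
    using cp by (simp add: field_simps)
qed

lemma EIG:
  assumes eig: "\<forall>x\<in>V. (\<Sum>y\<in>sphere V E 1 x. w y) = (\<theta>::real) * w x"
    and i: "i \<le> diameter V E"
  shows "\<exists>p. \<forall>x\<in>V. (\<Sum>y\<in>sphere V E i x. w y) = p * w x"
proof -
  have pair: "i + 1 \<le> diameter V E \<longrightarrow> (\<exists>p q. (\<forall>x\<in>V. (\<Sum>y\<in>sphere V E i x. w y) = p * w x)
     \<and> (\<forall>x\<in>V. (\<Sum>y\<in>sphere V E (i+1) x. w y) = q * w x))" for i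
  proof (induction i)
    case 0
    show ?case using eig by (intro impI exI[of _ 1] exI[of _ \<theta>]) (simp add: sphere0)
  next
    case (Suc i)
    show ?case
    proof
      assume le: "Suc i + 1 \<le> diameter V E"
      then obtain p q where p: "\<forall>x\<in>V. (\<Sum>y\<in>sphere V E i x. w y) = p * w x"
        and q: "\<forall>x\<in>V. (\<Sum>y\<in>sphere V E (i+1) x. w y) = q * w x" using Suc.IH by auto
      have r: "\<forall>x\<in>V. (\<Sum>y\<in>sphere V E (i+2) x. w y) =
         ((q * \<theta> - a (i+1) * q - real (b i) * p) / real (c (i+2))) * w x"
        using STEP[OF eig p q] le by simp
      show "\<exists>p q. (\<forall>x\<in>V. (\<Sum>y\<in>sphere V E (Suc i) x. w y) = p * w x)
         \<and> (\<forall>x\<in>V. (\<Sum>y\<in>sphere V E (Suc i + 1) x. w y) = q * w x)"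
      proof (rule exI[of _ q], rule exI[of _ "(q * \<theta> - a (i+1) * q - real (b i) * p) / real (c (i+2))"], rule conjI)
        show "\<forall>x\<in>V. (\<Sum>y\<in>sphere V E (Suc i) x. w y) = q * w x" using q by simp
        show "\<forall>x\<in>V. (\<Sum>y\<in>sphere V E (Suc i + 1) x. w y) = (q * \<theta> - a (i+1) * q - real (b i) * p) / real (c (i+2)) * w x"
          using r by (simp only: Suc_eq_plus1 add.assoc one_add_one)
      qed
    qed
  qed
  show ?thesis
  proof (cases i)
    case 0 then show ?thesis by (intro exI[of _ 1]) (simp add: sphere0)
  next
    case (Suc j) then show ?thesis using pair[of j] i by auto
  qed
qed

lemma a_zero: assumes "bipartite V E" "h \<le> diameter V E" shows "a h = 0"
proof -
  obtain x y where xy: "x \<in> V" "y \<in> V" "gd x y = h" using exists_dist assms by blast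
  have Eq: "{z\<in>V. E y z \<and> gd x z = gd x y} = {}"
  proof -
    { fix z assume "z \<in> V" "E y z" "gd x z = gd x y"
      then have False using bip_nb[OF assms(1) xy(1,2) \<open>z\<in>V\<close> \<open>E y z\<close>] by simp }
    then show ?thesis by auto
  qed
  have "card {z\<in>V. E y z \<and> gd x z = gd x y} = 0" unfolding Eq by simp
  then show ?thesis using partition[OF xy(1,2)] xy unfolding a_def by simp
qed

end

locale adc = drg +
  assumes adc: "antipodal_double_cover V E"
begin

abbreviation "D \<equiv> diameter V E"

lemma D_pos: "1 \<le> D" using adc unfolding antipodal_double_cover_def by auto

definition sig where "sig x = the_elem (sphere V E D x)"

lemma sig: assumes "x \<in> V" shows "sphere V E D x = {sig x}"
proof -
  have "card (sphere V E D x) = 1" using adc assms unfolding antipodal_double_cover_def by auto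
  then obtain y where "sphere V E D x = {y}" using card_1_singleton_iff by (metis One_nat_def)
  then show ?thesis unfolding sig_def by simp
qed

lemma sig_V: "x \<in> V \<Longrightarrow> sig x \<in> V" and sig_dist: "x \<in> V \<Longrightarrow> gd x (sig x) = D"
  using sig[of x] unfolding sphere_def by auto

lemma sig_unique: "x \<in> V \<Longrightarrow> y \<in> V \<Longrightarrow> gd x y = D \<Longrightarrow> y = sig x"
  using sig[of x] unfolding sphere_def by auto

lemma ANT: assumes x: "x \<in> V" and y: "y \<in> V" shows "gd x y + gd y (sig x) = D"
proof -
  have claim: "m \<le> D \<longrightarrow> (\<forall>y\<in>V. gd x y = D - m \<longrightarrow> gd y (sig x) \<le> m)" for m
  proof (induction m)
    case 0
    show ?case using sig_unique x dist_self by auto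
  next
    case (Suc m)
    show ?case
    proof (intro impI ballI)
      fix y assume le: "Suc m \<le> D" and y: "y \<in> V" and dy: "gd x y = D - Suc m"
      have "0 < b (gd x y)" using b_pos dy le by simp
      moreover have "card {z \<in> V. E y z \<and> gd x z = gd x y + 1} = b (gd x y)" using cnt x y by auto
      ultimately have "0 < card {z \<in> V. E y z \<and> gd x z = gd x y + 1}" by simp
      then have "{z \<in> V. E y z \<and> gd x z = gd x y + 1} \<noteq> {}" by (metis card.empty less_irrefl)
      then obtain z where z: "z \<in> V" "E y z" "gd x z = gd x y + 1" by blast
      have "gd z (sig x) \<le> m" using Suc.IH le z dy by auto
      moreover have "gd y z = 1" using dist_1_iff y z by auto
      ultimately show "gd y (sig x) \<le> Suc m" using dist_tri[OF y z(1) sig_V[OF x]] by simp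
    qed
  qed
  have "gd x y \<le> D" using dist_le_diam x y by simp
  then have "gd y (sig x) \<le> D - gd x y" using claim[of "D - gd x y"] y by simp
  moreover have "D \<le> gd x y + gd y (sig x)" using dist_tri[OF x y sig_V[OF x]] sig_dist[OF x] by simp
  ultimately show ?thesis using \<open>gd x y \<le> D\<close> by linarith
qed

lemma sig_sig: assumes x: "x \<in> V" shows "sig (sig x) = x"
proof -
  have "gd (sig x) x = D" using dist_sym[OF sig_V[OF x] x] sig_dist[OF x] by simp
  then show ?thesis using sig_unique[OF sig_V[OF x] x] by simp
qed

lemma dist_sig: assumes x: "x \<in> V" and y: "y \<in> V" shows "gd x (sig y) = D - gd x y"
  using ANT[OF y x] dist_sym[OF x y] by simp

lemma sig_ne: "x \<in> V \<Longrightarrow> sig x \<noteq> x"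
  using sig_dist[of x] dist_self[of x] D_pos by auto

lemma sumD: "x \<in> V \<Longrightarrow> (\<Sum>y\<in>sphere V E D x. w y) = w (sig x)"
  using sig by simp

lemma ANTI:
  assumes eig: "\<forall>x\<in>V. (\<Sum>y\<in>sphere V E 1 x. w y) = (\<theta>::real) * w x"
    and x0: "x0 \<in> V" "w (sig x0) \<noteq> w x0"
  shows "\<forall>x\<in>V. w (sig x) = - w x"
proof -
  obtain p where "\<forall>x\<in>V. (\<Sum>y\<in>sphere V E D x. w y) = p * w x" using EIG[OF eig, of D] by auto
  then have p: "\<forall>x\<in>V. w (sig x) = p * w x"
  proof (intro ballI)
    fix x assume "\<forall>x\<in>V. (\<Sum>y\<in>sphere V E D x. w y) = p * w x" and x: "x \<in> V"
    then have "(\<Sum>y\<in>sphere V E D x. w y) = p * w x" by blast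
    then show "w (sig x) = p * w x" using sumD[OF x, of w] by simp
  qed
  have "p \<noteq> 1" using p x0 by auto
  show ?thesis
  proof
    fix x assume x: "x \<in> V"
    have "w (sig x) = p * w x" using p x by auto
    moreover have "w (sig (sig x)) = p * w (sig x)" using p sig_V[OF x] by blast
    then have "w x = p * w (sig x)" using sig_sig[OF x] by simp
    ultimately have "(1 - p) * (w x + w (sig x)) = 0" by (simp add: algebra_simps)
    then show "w (sig x) = - w x" using \<open>p \<noteq> 1\<close> by simp
  qed
qed

lemma card_sphere_const: assumes "i \<le> D"
  shows "\<exists>K. \<forall>x\<in>V. real (card (sphere V E i x)) = K"
proof -
  have "\<forall>x\<in>V. (\<Sum>y\<in>sphere V E 1 x. (\<lambda>_. 1::real) y) = real (b 0) * 1"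
    using deg sphere1 by simp
  from EIG[OF this assms] show ?thesis by auto
qed

lemma card_nbhd: assumes "finite Ds" "x \<in> V"
  shows "card (dist_nbhd V E Ds x) = (\<Sum>i\<in>Ds. card (sphere V E i x))"
proof -
  have "dist_nbhd V E Ds x = (\<Union>i\<in>Ds. sphere V E i x)"
    unfolding dist_nbhd_def sphere_def by auto
  moreover have "card (\<Union>i\<in>Ds. sphere V E i x) = (\<Sum>i\<in>Ds. card (sphere V E i x))"
    using assms finV by (intro card_UN_disjoint) (auto simp: sphere_def intro: finite_subset)
  ultimately show ?thesis by simp
qed

lemma nbhd_zero:
  assumes anti: "\<forall>x\<in>V. w (sig x) = - (w x :: real)" and j: "j \<le> D" and x: "x \<in> V"
  shows "(\<Sum>y\<in>dist_nbhd V E {j, D - j} x. w y) = 0"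
proof -
  let ?N = "dist_nbhd V E {j, D - j} x"
  have inN: "sig y \<in> ?N" if "y \<in> ?N" for y
  proof -
    from that have y: "y \<in> V" "gd x y = j \<or> gd x y = D - j" unfolding dist_nbhd_def by auto
    then have "gd x (sig y) = j \<or> gd x (sig y) = D - j" using dist_sig[OF x y(1)] j by auto
    then show ?thesis using sig_V[OF y(1)] unfolding dist_nbhd_def by auto
  qed
  have NV: "?N \<subseteq> V" by (auto simp: dist_nbhd_def)
  have ss: "\<forall>y\<in>?N. sig (sig y) = y" using NV sig_sig by auto
  have im: "sig ` ?N \<subseteq> ?N" using inN by auto
  have bij: "bij_betw sig ?N ?N"
    by (rule bij_betw_byWitness[where f'=sig, OF ss ss im im])
  have "(\<Sum>y\<in>?N. w y) = (\<Sum>y\<in>?N. w (sig y))" using sum.reindex_bij_betw[OF bij, of w] by simp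
  also have "\<dots> = (\<Sum>y\<in>?N. - w y)" using anti by (intro sum.cong) (auto simp: dist_nbhd_def)
  also have "\<dots> = - (\<Sum>y\<in>?N. w y)" by (simp add: sum_negf)
  finally show ?thesis by simp
qed

lemma part1:
  assumes inj: "inj_on l V"
    and eig: "\<forall>x\<in>V. (\<Sum>y\<in>sphere V E 1 x. real (l y) - c0) = \<theta> * (real (l x) - c0)"
    and j: "j \<le> D"
  shows "\<exists>k. \<forall>x\<in>V. (\<Sum>y\<in>dist_nbhd V E {j, D - j} x. l y) = k"
proof -
  define w where "w y = real (l y) - c0" for y
  obtain x0 where x0: "x0 \<in> V" using neV by auto
  have "w (sig x0) \<noteq> w x0" using inj sig_V[OF x0] sig_ne[OF x0] x0 unfolding w_def inj_on_def by auto
  then have anti: "\<forall>x\<in>V. w (sig x) = - w x" using ANTI[of w \<theta> x0] eig x0 unfolding w_def by auto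
  have "\<forall>i. \<exists>K. i \<le> D \<longrightarrow> (\<forall>x\<in>V. real (card (sphere V E i x)) = K)" using card_sphere_const by auto
  from choice[OF this] obtain K where K0: "\<forall>i. i \<le> D \<longrightarrow> (\<forall>x\<in>V. real (card (sphere V E i x)) = K i)" by blast
  then have K: "\<And>i x. i \<le> D \<Longrightarrow> x \<in> V \<Longrightarrow> real (card (sphere V E i x)) = K i" by blast
  have val: "real (\<Sum>y\<in>dist_nbhd V E {j, D - j} x. l y) = c0 * (\<Sum>i\<in>{j, D - j}. K i)" if x: "x \<in> V" for x
  proof -
    let ?N = "dist_nbhd V E {j, D - j} x"
    have "real (\<Sum>y\<in>?N. l y) = (\<Sum>y\<in>?N. w y + c0)" unfolding w_def by simp
    also have "\<dots> = c0 * real (card ?N)" using nbhd_zero[OF anti j x] by (simp add: sum.distrib)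
    also have "real (card ?N) = (\<Sum>i\<in>{j, D - j}. real (card (sphere V E i x)))"
      using card_nbhd[OF _ x] by simp
    also have "\<dots> = (\<Sum>i\<in>{j, D - j}. K i)" using K j x by (intro sum.cong) auto
    finally show ?thesis .
  qed
  have "\<forall>x\<in>V. real (\<Sum>y\<in>dist_nbhd V E {j, D - j} x. l y) = real (\<Sum>y\<in>dist_nbhd V E {j, D - j} x0. l y)"
    using val x0 by simp
  then have "\<forall>x\<in>V. (\<Sum>y\<in>dist_nbhd V E {j, D - j} x. l y) = (\<Sum>y\<in>dist_nbhd V E {j, D - j} x0. l y)"
    by (simp only: of_nat_eq_iff)
  then show ?thesis by blast
qed

lemma part2:
  assumes bip: "bipartite V E" and inj: "inj_on l V"
    and eig: "\<forall>x\<in>V. (\<Sum>y\<in>sphere V E 1 x. real (l y) - c0) = 0 * (real (l x) - c0)"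
  shows "D mod 4 = 2"
proof -
  define w where "w y = real (l y) - c0" for y
  have eigw: "\<forall>x\<in>V. (\<Sum>y\<in>sphere V E 1 x. w y) = 0 * w x" using eig unfolding w_def by simp
  obtain x0 where x0: "x0 \<in> V" using neV by auto
  have ne: "w (sig x0) \<noteq> w x0" using inj sig_V[OF x0] sig_ne[OF x0] x0 unfolding w_def inj_on_def by auto
  then have anti: "\<forall>x\<in>V. w (sig x) = - w x" using ANTI[OF eigw x0] by auto
  have w0: "w x0 \<noteq> 0" using ne anti x0 by auto
  define P where "P i p \<longleftrightarrow> (odd i \<longrightarrow> p = 0) \<and> (even i \<longrightarrow> (-1::real)^(i div 2) * p > 0)" for i p
  have pair: "i + 1 \<le> D \<longrightarrow> (\<exists>p q. (\<forall>x\<in>V. (\<Sum>y\<in>sphere V E i x. w y) = p * w x)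
     \<and> (\<forall>x\<in>V. (\<Sum>y\<in>sphere V E (i+1) x. w y) = q * w x) \<and> P i p \<and> P (i+1) q)" for i
  proof (induction i)
    case 0
    show ?case using eigw by (intro impI exI[of _ 1] exI[of _ 0]) (simp add: sphere0 P_def)
  next
    case (Suc i)
    show ?case
    proof
      assume le: "Suc i + 1 \<le> D"
      then obtain p q where p: "\<forall>x\<in>V. (\<Sum>y\<in>sphere V E i x. w y) = p * w x"
        and q: "\<forall>x\<in>V. (\<Sum>y\<in>sphere V E (i+1) x. w y) = q * w x" and Pp: "P i p" and Pq: "P (i+1) q"
        using Suc.IH by auto
      define r where "r = - (real (b i) * p) / real (c (i+2))"
      have "a (i+1) = 0" using a_zero[OF bip] le by simp
      then have r: "\<forall>x\<in>V. (\<Sum>y\<in>sphere V E (i+2) x. w y) = r * w x"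
        using STEP[OF eigw p q] le unfolding r_def by simp
      have bp: "0 < b i" using b_pos le by simp
      have cp: "0 < c (i+2)" using c_pos le by simp
      have Pr: "P (i+2) r"
      proof (cases "odd i")
        case True then show ?thesis using Pp unfolding P_def r_def by simp
      next
        case False
        have "(i+2) div 2 = i div 2 + 1" by simp
        then have "(-1::real)^((i+2) div 2) = - ((-1)^(i div 2))" by simp
        then have "(-1::real)^((i+2) div 2) * r = (real (b i) / real (c (i+2))) * ((-1)^(i div 2) * p)"
          unfolding r_def by simp
        moreover have "(-1::real)^(i div 2) * p > 0" using Pp False unfolding P_def by simp
        ultimately have "(-1::real)^((i+2) div 2) * r > 0" using bp cp by simp
        then show ?thesis using False unfolding P_def by simp
      qed
      show "\<exists>p q. (\<forall>x\<in>V. (\<Sum>y\<in>sphere V E (Suc i) x. w y) = p * w x)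
         \<and> (\<forall>x\<in>V. (\<Sum>y\<in>sphere V E (Suc i + 1) x. w y) = q * w x) \<and> P (Suc i) p \<and> P (Suc i + 1) q"
        using q r Pq Pr by (intro exI[of _ q] exI[of _ r]) (simp add: numeral_2_eq_2)
    qed
  qed
  obtain j where j: "D = Suc j" using D_pos by (cases D) auto
  obtain p q where q: "\<forall>x\<in>V. (\<Sum>y\<in>sphere V E (j+1) x. w y) = q * w x" and Pq: "P (j+1) q"
    using pair[of j] j by auto
  have "(\<Sum>y\<in>sphere V E D x0. w y) = q * w x0" using q x0 j by simp
  then have "w (sig x0) = q * w x0" using sumD[OF x0, of w] by simp
  then have "(q + 1) * w x0 = 0" using anti x0 by (simp add: algebra_simps)
  then have "q = -1" using w0 by simp
  then have "even D" and neg: "(-1::real)^(D div 2) < 0" using Pq j unfolding P_def by auto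
  have "odd (D div 2)"
  proof
    assume "even (D div 2)" then show False using neg by simp
  qed
  moreover have "\<And>n::nat. odd (n div 2) \<Longrightarrow> even n \<Longrightarrow> n mod 4 = 2"
    unfolding even_iff_mod_2_eq_zero by presburger
  ultimately show ?thesis using \<open>even D\<close> by blast
qed


lemma card_sph1: "x \<in> V \<Longrightarrow> card (sphere V E 1 x) = b 0"
  using sphere1 deg by simp

lemma dm_eig: assumes "distance_magic V E l"
  shows "\<exists>c0. \<forall>x\<in>V. (\<Sum>y\<in>sphere V E 1 x. real (l y) - c0) = 0 * (real (l x) - c0)"
proof -
  obtain \<kappa> where k: "\<forall>x\<in>V. (\<Sum>y\<in>dist_nbhd V E {1} x. l y) = \<kappa>" using assms unfolding D_magic_def by blast
  have bp: "0 < b 0" using b_pos D_pos by simp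
  have "\<forall>x\<in>V. (\<Sum>y\<in>sphere V E 1 x. real (l y) - \<kappa> / b 0) = 0 * (real (l x) - \<kappa> / b 0)"
  proof
    fix x assume x: "x \<in> V"
    have "dist_nbhd V E {1} x = sphere V E 1 x" unfolding dist_nbhd_def sphere_def by auto
    moreover have "(\<Sum>y\<in>dist_nbhd V E {1} x. l y) = \<kappa>" using k x by blast
    ultimately have "(\<Sum>y\<in>sphere V E 1 x. l y) = \<kappa>" by simp
    then have "(\<Sum>y\<in>sphere V E 1 x. real (l y)) = real \<kappa>" by (metis of_nat_sum)
    then show "(\<Sum>y\<in>sphere V E 1 x. real (l y) - \<kappa> / b 0) = 0 * (real (l x) - \<kappa> / b 0)"
      using card_sph1[OF x] bp by (simp add: sum_subtractf)
  qed
  then show ?thesis by blast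
qed

lemma cdm_eig: assumes "closed_distance_magic V E l"
  shows "\<exists>c0. \<forall>x\<in>V. (\<Sum>y\<in>sphere V E 1 x. real (l y) - c0) = (-1) * (real (l x) - c0)"
proof -
  obtain \<kappa> where k: "\<forall>x\<in>V. (\<Sum>y\<in>dist_nbhd V E {0, 1} x. l y) = \<kappa>" using assms unfolding D_magic_def by blast
  have "\<forall>x\<in>V. (\<Sum>y\<in>sphere V E 1 x. real (l y) - \<kappa> / (b 0 + 1)) = (-1) * (real (l x) - \<kappa> / (b 0 + 1))"
  proof
    fix x assume x: "x \<in> V"
    have "dist_nbhd V E {0, 1} x = insert x (sphere V E 1 x)" unfolding dist_nbhd_def sphere_def
      using x dist_self dist_0 by auto
    moreover have "x \<notin> sphere V E 1 x" unfolding sphere_def using dist_self by simp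
    moreover have "finite (sphere V E 1 x)" using finV sphere_sub finite_subset by blast
    moreover have "(\<Sum>y\<in>dist_nbhd V E {0, 1} x. l y) = \<kappa>" using k x by blast
    ultimately have "l x + (\<Sum>y\<in>sphere V E 1 x. l y) = \<kappa>" by simp
    then have "real (l x) + (\<Sum>y\<in>sphere V E 1 x. real (l y)) = real \<kappa>" by (metis of_nat_add of_nat_sum)
    then show "(\<Sum>y\<in>sphere V E 1 x. real (l y) - \<kappa> / (b 0 + 1)) = (-1) * (real (l x) - \<kappa> / (b 0 + 1))"
    proof -
      let ?K = "real \<kappa> / real (b 0 + 1)"
      have "(\<Sum>y\<in>sphere V E 1 x. real (l y) - ?K) = (\<Sum>y\<in>sphere V E 1 x. real (l y)) - real (b 0) * ?K"
        using card_sph1[OF x] by (simp add: sum_subtractf)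
      also have "\<dots> = real \<kappa> - real (l x) - real (b 0) * ?K" using \<open>real (l x) + _ = _\<close> by simp
      also have "\<dots> = (-1) * (real (l x) - ?K)" by (simp add: field_simps)
      finally show ?thesis by simp
    qed
  qed
  then show ?thesis by blast
qed

end

theorem theorem2p7:
  fixes V :: "'a set" and E :: "'a \<Rightarrow> 'a \<Rightarrow> bool" and l :: "'a \<Rightarrow> nat" and d :: nat
  assumes "distance_regular V E"
    and "d = diameter V E"
    and "antipodal_double_cover V E"
  shows "((distance_magic V E l \<or> closed_distance_magic V E l) \<longrightarrow>
           (\<forall>j\<in>{0..d}. D_magic V E {j, d - j} l))
         \<and> (bipartite V E \<and> distance_magic V E l \<longrightarrow> d mod 4 = 2)"
proof -
  obtain b c where conn: "connected_graph V E" and cnt: "\<forall>x\<in>V. \<forall>y\<in>V.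
        card {z \<in> V. E y z \<and> gdist V E x z + 1 = gdist V E x y} = c (gdist V E x y) \<and>
        card {z \<in> V. E y z \<and> gdist V E x z = gdist V E x y + 1} = b (gdist V E x y)"
    using assms(1) unfolding distance_regular_def by blast
  interpret G: adc V E b c
    by unfold_locales (use conn cnt assms(3) in auto)
  show ?thesis
  proof (intro conjI impI)
    assume m: "distance_magic V E l \<or> closed_distance_magic V E l"
    then have bij: "bij_betw l V {1..card V}" unfolding D_magic_def by blast
    then have inj: "inj_on l V" by (rule bij_betw_imp_inj_on)
    obtain c0 \<theta> where eig: "\<forall>x\<in>V. (\<Sum>y\<in>sphere V E 1 x. real (l y) - c0) = \<theta> * (real (l x) - c0)"
      using m G.dm_eig G.cdm_eig by blast
    show "\<forall>j\<in>{0..d}. D_magic V E {j, d - j} l"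
    proof
      fix j assume "j \<in> {0..d}"
      then have j: "j \<le> diameter V E" using assms(2) by simp
      show "D_magic V E {j, d - j} l"
        unfolding D_magic_def using bij G.part1[OF inj eig j] assms(2) by simp
    qed
  next
    assume "bipartite V E \<and> distance_magic V E l"
    then have bip: "bipartite V E" and m: "distance_magic V E l" by auto
    then have inj: "inj_on l V" unfolding D_magic_def using bij_betw_imp_inj_on by blast
    obtain c0 where eig: "\<forall>x\<in>V. (\<Sum>y\<in>sphere V E 1 x. real (l y) - c0) = 0 * (real (l x) - c0)"
      using G.dm_eig[OF m] by blast
    show "d mod 4 = 2" using G.part2[OF bip inj eig] assms(2) by simp
  qed
qed

end
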